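(* Let $\boldsymbol\alpha\in\mathbb C^d$. If the Zariski closure of the equivalence class $[\boldsymbol\alpha]$ is all of $\mathbb C^d$, then $\mathbb R_{>0}(\boldsymbol\alpha)$ is nonempty.
   Context: $A\subset\mathbb Z^d$ is a finite set generating the group $\mathbb Z^d$; $\mathbb NA$ its monoid. For a face $\tau$ of the cone $\mathbb R_{\ge0}A$ and $\boldsymbol\alpha\in\mathbb C^d$, $E_\tau(\boldsymbol\alpha)=\{\boldsymbol\lambda\in\mathbb C(A\cap\tau)/\mathbb Z(A\cap\tau):\boldsymbol\alpha-\boldsymbol\lambda\in\mathbb NA+\mathbb Z(A\cap\tau)\}$; $\boldsymbol\alpha\sim\boldsymbol\beta$ iff $E_\tau(\boldsymbol\alpha)=E_\tau(\boldsymbol\beta)$ for all faces $\tau$, and $[\boldsymbol\alpha]\subseteq\mathbb C^d$ is the equivalence class of $\boldsymbol\alpha$. For a facet $\sigma$, $F_\sigma$ is the unique linear form (extended $\mathbb C$-linearly) with $F_\sigma(\mathbb R_{\ge0}A)\ge0$, $F_\sigma(\sigma)=0$, $F_\sigma(\mathbb Z^d)=\mathbb Z$. $\mathcal F_+(\boldsymbol\alpha)=\{\sigma:F_\sigma(\boldsymbol\alpha)\in F_\sigma(\mathbb NA)\}$, $\mathcal F_-(\boldsymbol\alpha)=\{\sigma:F_\sigma(\boldsymbol\alpha)\in\mathbb Z\setminus F_\sigma(\mathbb NA)\}$, and $\mathbb R_{>0}(\boldsymbol\alpha)=\{\boldsymbol\gamma\in\mathbb R^d:F_\sigma(\boldsymbol\gamma)>0\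 (\sigma\in\mathcal F_+(\boldsymbol\alpha)),\ F_\sigma(\boldsymbol\gamma)<0\ (\sigma\in\mathcal F_-(\boldsymbol\alpha))\}$. *)

theory Defs
  imports "HOL-Analysis.Analysis"
begin

text \<open>Lattice points of Z^d are vectors int^'d; the index type 'd is the dimension d.\<close>

definition rvec :: "int ^ 'd \<Rightarrow> real ^ 'd" where
  "rvec v = (\<chi> i. of_int (v $ i))"

definition cvec :: "int ^ 'd \<Rightarrow> complex ^ 'd" where
  "cvec v = (\<chi> i. of_int (v $ i))"

definition int_span :: "(int ^ 'd) set \<Rightarrow> (int ^ 'd) set" where
  "int_span B = {(\<Sum>a\<in>B. k a *s a) | k. True}"

definition nat_monoid :: "(int ^ 'd) set \<Rightarrow> (int ^ 'd) set" where
  "nat_monoid A = {(\<Sum>a\<in>A. of_nat (n a) *s a) | n :: int ^ 'd \<Rightarrow> nat. True}"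

definition cplx_span :: "(int ^ 'd) set \<Rightarrow> (complex ^ 'd) set" where
  "cplx_span B = {(\<Sum>a\<in>B. c a *s cvec a) | c. True}"

definition pos_cone :: "(int ^ 'd) set \<Rightarrow> (real ^ 'd) set" where
  "pos_cone A = {(\<Sum>a\<in>A. c a *\<^sub>R rvec a) | c. \<forall>a\<in>A. c a \<ge> 0}"

text \<open>Faces of the cone (nonempty faces in the sense of convex geometry; for a
polyhedral cone these are exactly the polyhedral faces).\<close>

definition cone_face :: "(int ^ 'd) set \<Rightarrow> (real ^ 'd) set \<Rightarrow> bool" where
  "cone_face A \<tau> \<longleftrightarrow> \<tau> face_of pos_cone A \<and> \<tau> \<noteq> {}"

definition A_in :: "(int ^ 'd) set \<Rightarrow> (real ^ 'd) set \<Rightarrow> (int ^ 'd) set" where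
  "A_in A \<tau> = {a \<in> A. rvec a \<in> \<tau>}"

text \<open>E_tau(alpha), represented as the union of the cosets in C(A\<inter>tau)/Z(A\<inter>tau)
it consists of (this set is Z(A\<inter>tau)-invariant, so equality of these unions is
equality of the sets of cosets).\<close>

definition E_set :: "(int ^ 'd) set \<Rightarrow> (real ^ 'd) set \<Rightarrow> complex ^ 'd \<Rightarrow> (complex ^ 'd) set" where
  "E_set A \<tau> \<alpha> = {l \<in> cplx_span (A_in A \<tau>).
      \<exists>v\<in>nat_monoid A. \<exists>z\<in>int_span (A_in A \<tau>). \<alpha> - l = cvec (v + z)}"

definition equiv_class :: "(int ^ 'd) set \<Rightarrow> complex ^ 'd \<Rightarrow> (complex ^ 'd) set" where
  "equiv_class A \<alpha> = {\<beta>. \<forall>\<tau>. cone_face A \<tau> \<longrightarrow> E_set A \<tau> \<alpha> = E_set A \<tau> \<beta>}"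

definition poly_fun :: "(complex ^ 'd \<Rightarrow> complex) \<Rightarrow> bool" where
  "poly_fun f \<longleftrightarrow> (\<exists>S c. finite (S :: ('d \<Rightarrow> nat) set) \<and>
      f = (\<lambda>x. \<Sum>m\<in>S. c m * (\<Prod>i\<in>UNIV. (x $ i) ^ (m i))))"

definition zariski_closure :: "(complex ^ 'd) set \<Rightarrow> (complex ^ 'd) set" where
  "zariski_closure S = {x. \<forall>f. poly_fun f \<and> (\<forall>y\<in>S. f y = 0) \<longrightarrow> f x = 0}"

text \<open>The primitive integral support form F_sigma of a facet sigma, given by a
vector w with F_sigma(x) = w \<bullet> x.\<close>

definition is_facet_form :: "(int ^ 'd) set \<Rightarrow> (real ^ 'd) set \<Rightarrow> real ^ 'd \<Rightarrow> bool" where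
  "is_facet_form A \<sigma> w \<longleftrightarrow> (\<forall>x\<in>pos_cone A. w \<bullet> x \<ge> 0) \<and> (\<forall>x\<in>\<sigma>. w \<bullet> x = 0)
      \<and> (\<lambda>z. w \<bullet> rvec z) ` UNIV = \<int>"

definition facet_form :: "(int ^ 'd) set \<Rightarrow> (real ^ 'd) set \<Rightarrow> real ^ 'd" where
  "facet_form A \<sigma> = (THE w. is_facet_form A \<sigma> w)"

definition cform :: "real ^ 'd \<Rightarrow> complex ^ 'd \<Rightarrow> complex" where
  "cform w \<alpha> = (\<Sum>i\<in>UNIV. complex_of_real (w $ i) * \<alpha> $ i)"

definition F_plus :: "(int ^ 'd) set \<Rightarrow> complex ^ 'd \<Rightarrow> (real ^ 'd) set set" where
  "F_plus A \<alpha> = {\<sigma>. \<sigma> facet_of pos_cone A \<and>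
      cform (facet_form A \<sigma>) \<alpha> \<in> (\<lambda>v. cform (facet_form A \<sigma>) (cvec v)) ` nat_monoid A}"

definition F_minus :: "(int ^ 'd) set \<Rightarrow> complex ^ 'd \<Rightarrow> (real ^ 'd) set set" where
  "F_minus A \<alpha> = {\<sigma>. \<sigma> facet_of pos_cone A \<and> cform (facet_form A \<sigma>) \<alpha> \<in> \<int> \<and>
      cform (facet_form A \<sigma>) \<alpha> \<notin> (\<lambda>v. cform (facet_form A \<sigma>) (cvec v)) ` nat_monoid A}"

definition R_pos :: "(int ^ 'd) set \<Rightarrow> complex ^ 'd \<Rightarrow> (real ^ 'd) set" where
  "R_pos A \<alpha> = {\<gamma>. (\<forall>\<sigma>\<in>F_plus A \<alpha>. facet_form A \<sigma> \<bullet> \<gamma> > 0) \<and>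
      (\<forall>\<sigma>\<in>F_minus A \<alpha>. facet_form A \<sigma> \<bullet> \<gamma> < 0)}"

end

theory Submission
  imports Defs
begin

lemma rvec_add: "rvec (x + y) = rvec x + rvec y"
  by (simp add: rvec_def vec_eq_iff)
lemma rvec_diff: "rvec (x - y) = rvec x - rvec y"
  by (simp add: rvec_def vec_eq_iff)
lemma rvec_0 [simp]: "rvec 0 = 0"
  by (simp add: rvec_def vec_eq_iff)
lemma rvec_smult: "rvec (k *s x) = of_int k *\<^sub>R rvec x"
  by (simp add: rvec_def vec_eq_iff)
lemma rvec_sum: "rvec (\<Sum>a\<in>S. f a) = (\<Sum>a\<in>S. rvec (f a))"
  by (induction S rule: infinite_finite_induct) (auto simp: rvec_add)
lemma rvec_inj: "inj rvec"
  by (auto simp: inj_def rvec_def vec_eq_iff)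
lemma rvec_Ints: "rvec z $ i \<in> \<int>"
  by (simp add: rvec_def)

lemma cvec_add: "cvec (x + y) = cvec x + cvec y"
  by (simp add: cvec_def vec_eq_iff)
lemma cvec_diff: "cvec (x - y) = cvec x - cvec y"
  by (simp add: cvec_def vec_eq_iff)
lemma cvec_0 [simp]: "cvec 0 = 0"
  by (simp add: cvec_def vec_eq_iff)
lemma cvec_smult: "cvec (k *s x) = of_int k *s cvec x"
  by (simp add: cvec_def vec_eq_iff)
lemma cvec_sum: "cvec (\<Sum>a\<in>S. f a) = (\<Sum>a\<in>S. cvec (f a))"
  by (induction S rule: infinite_finite_induct) (auto simp: cvec_add)

lemma cform_add: "cform w (x + y) = cform w x + cform w y"
  by (simp add: cform_def algebra_simps sum.distrib)
lemma cform_diff: "cform w (x - y) = cform w x - cform w y"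
  by (simp add: cform_def algebra_simps sum_subtractf)
lemma cform_0 [simp]: "cform w 0 = 0"
  by (simp add: cform_def)
lemma cform_smult: "cform w (c *s x) = c * cform w x"
  by (simp add: cform_def sum_distrib_left algebra_simps)
lemma cform_sum: "cform w (\<Sum>a\<in>S. f a) = (\<Sum>a\<in>S. cform w (f a))"
  by (induction S rule: infinite_finite_induct) (auto simp: cform_add)
lemma cform_cvec: "cform w (cvec z) = of_real (w \<bullet> rvec z)"
  by (simp add: cform_def cvec_def rvec_def inner_vec_def)
lemma cform_uminus: "cform (- w) x = - cform w x"
  by (simp add: cform_def sum_negf)

lemma inner_rvec_Ints:
  assumes "(\<lambda>z. w \<bullet> rvec z) ` UNIV = \<int>"
  shows "w \<bullet> rvec z \<in> \<int>"
  using assms by blast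

lemma smult_sum: "(c::'a::comm_ring_1) *s (\<Sum>a\<in>S. f a) = (\<Sum>a\<in>S. c *s f a)"
  by (induction S rule: infinite_finite_induct) (auto simp: vector_add_ldistrib)

lemma nat_monoid_0: "0 \<in> nat_monoid A"
  unfolding nat_monoid_def by (rule CollectI, rule exI[of _ "\<lambda>_. 0"]) simp
lemma nat_monoid_add:
  assumes "u \<in> nat_monoid A" "v \<in> nat_monoid A"
  shows "u + v \<in> nat_monoid A"
proof -
  obtain n1 n2 where "u = (\<Sum>a\<in>A. of_nat (n1 a) *s a)" "v = (\<Sum>a\<in>A. of_nat (n2 a) *s a)"
    using assms unfolding nat_monoid_def by blast
  then have "u + v = (\<Sum>a\<in>A. of_nat (n1 a + n2 a) *s a)"
    by (simp add: sum.distrib vector_sadd_rdistrib)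
  then show ?thesis unfolding nat_monoid_def by (intro CollectI exI[where x="\<lambda>a. n1 a + n2 a"]) simp
qed
lemma nat_monoid_smult:
  assumes "u \<in> nat_monoid A"
  shows "of_nat k *s u \<in> nat_monoid A"
proof -
  obtain n1 where "u = (\<Sum>a\<in>A. of_nat (n1 a) *s a)"
    using assms unfolding nat_monoid_def by blast
  then have "of_nat k *s u = (\<Sum>a\<in>A. of_nat (k * n1 a) *s a)"
    by (simp add: smult_sum vector_smult_assoc)
  then show ?thesis unfolding nat_monoid_def by (intro CollectI exI[where x="\<lambda>a. k * n1 a"]) simp
qed
lemma nat_monoid_gen:
  assumes "finite A" "a \<in> A" shows "a \<in> nat_monoid A"
proof -
  have "(\<Sum>b\<in>A. of_nat (if b = a then 1 else 0) *s b) = (\<Sum>b\<in>A. if b = a then b else 0)"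
    by (rule sum.cong) auto
  also have "\<dots> = a" using assms by simp
  finally show ?thesis unfolding nat_monoid_def by (intro CollectI exI[where x="\<lambda>b. if b = a then 1 else 0"]) simp
qed

lemma int_span_0: "0 \<in> int_span A"
  unfolding int_span_def by (rule CollectI, rule exI[of _ "\<lambda>_. 0"]) simp
lemma int_span_add:
  assumes "u \<in> int_span A" "v \<in> int_span A"
  shows "u + v \<in> int_span A"
proof -
  obtain n1 n2 where "u = (\<Sum>a\<in>A. n1 a *s a)" "v = (\<Sum>a\<in>A. n2 a *s a)"
    using assms unfolding int_span_def by blast
  then have "u + v = (\<Sum>a\<in>A. (n1 a + n2 a) *s a)"
    by (simp add: sum.distrib vector_sadd_rdistrib)
  then show ?thesis unfolding int_span_def by (intro CollectI exI[where x="\<lambda>a. n1 a + n2 a"]) simp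
qed

lemma cplx_span_0: "0 \<in> cplx_span A"
  unfolding cplx_span_def by (rule CollectI, rule exI[of _ "\<lambda>_. 0"]) simp
lemma cplx_span_add:
  assumes "u \<in> cplx_span A" "v \<in> cplx_span A"
  shows "u + v \<in> cplx_span A"
proof -
  obtain n1 n2 where "u = (\<Sum>a\<in>A. n1 a *s cvec a)" "v = (\<Sum>a\<in>A. n2 a *s cvec a)"
    using assms unfolding cplx_span_def by blast
  then have "u + v = (\<Sum>a\<in>A. (n1 a + n2 a) *s cvec a)"
    by (simp add: sum.distrib vector_sadd_rdistrib)
  then show ?thesis unfolding cplx_span_def by (intro CollectI exI[where x="\<lambda>a. n1 a + n2 a"]) simp
qed
lemma cplx_span_smult:
  assumes "u \<in> cplx_span A"
  shows "c *s u \<in> cplx_span A"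
proof -
  obtain n1 where "u = (\<Sum>a\<in>A. n1 a *s cvec a)"
    using assms unfolding cplx_span_def by blast
  then have "c *s u = (\<Sum>a\<in>A. (c * n1 a) *s cvec a)"
    by (simp add: smult_sum vector_smult_assoc)
  then show ?thesis unfolding cplx_span_def by (intro CollectI exI[where x="\<lambda>a. c * n1 a"]) simp
qed
lemma cplx_span_sum:
  "(\<And>i. i \<in> I \<Longrightarrow> f i \<in> cplx_span A) \<Longrightarrow> (\<Sum>i\<in>I. f i) \<in> cplx_span A"
  by (induction I rule: infinite_finite_induct) (auto simp: cplx_span_0 cplx_span_add)
lemma cplx_span_int:
  assumes "z \<in> int_span A" shows "cvec z \<in> cplx_span A"
proof -
  obtain n1 where "z = (\<Sum>a\<in>A. n1 a *s a)"
    using assms unfolding int_span_def by blast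
  then have "cvec z = (\<Sum>a\<in>A. (of_int (n1 a)) *s cvec a)"
    by (simp add: cvec_sum cvec_smult)
  then show ?thesis unfolding cplx_span_def by (intro CollectI exI[where x="\<lambda>a. of_int (n1 a)"]) simp
qed

lemma rvec_nat_monoid:
  assumes "v \<in> nat_monoid A" shows "rvec v \<in> pos_cone A"
proof -
  obtain n1 where "v = (\<Sum>a\<in>A. of_nat (n1 a) *s a)"
    using assms unfolding nat_monoid_def by blast
  then have "rvec v = (\<Sum>a\<in>A. real (n1 a) *\<^sub>R rvec a)"
    by (simp add: rvec_sum rvec_smult)
  then show ?thesis unfolding pos_cone_def by force
qed

lemma cchull_sum:
  "(\<And>i. i \<in> I \<Longrightarrow> f i \<in> convex_cone hull T) \<Longrightarrow> (\<Sum>i\<in>I. f i) \<in> convex_cone hull T"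
  by (induction I rule: infinite_finite_induct)
     (auto simp: convex_cone_hull_contains_0 convex_cone_hull_add)

lemma pos_cone_cc: "convex_cone (pos_cone A)"
  unfolding convex_cone_iff
proof (intro conjI ballI allI impI)
  show "0 \<in> pos_cone A" unfolding pos_cone_def
    by (intro CollectI exI[where x="\<lambda>_. 0"]) simp
  fix x y assume "x \<in> pos_cone A" "y \<in> pos_cone A"
  then obtain c d where c: "x = (\<Sum>a\<in>A. c a *\<^sub>R rvec a)" "\<forall>a\<in>A. c a \<ge> 0"
    and d: "y = (\<Sum>a\<in>A. d a *\<^sub>R rvec a)" "\<forall>a\<in>A. d a \<ge> 0"
    unfolding pos_cone_def by blast
  have "x + y = (\<Sum>a\<in>A. (c a + d a) *\<^sub>R rvec a)"
    using c d by (simp add: sum.distrib scaleR_add_left)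
  then show "x + y \<in> pos_cone A" using c d unfolding pos_cone_def
    by (intro CollectI exI[where x="\<lambda>a. c a + d a"]) auto
next
  fix x and t :: real assume "x \<in> pos_cone A" "0 \<le> t"
  then obtain c where c: "x = (\<Sum>a\<in>A. c a *\<^sub>R rvec a)" "\<forall>a\<in>A. c a \<ge> 0"
    unfolding pos_cone_def by blast
  have "t *\<^sub>R x = (\<Sum>a\<in>A. (t * c a) *\<^sub>R rvec a)"
    using c by (simp add: scaleR_sum_right)
  then show "t *\<^sub>R x \<in> pos_cone A" using c \<open>0 \<le> t\<close> unfolding pos_cone_def
    by (intro CollectI exI[where x="\<lambda>a. t * c a"]) auto
qed

lemma rvec_in_pos_cone:
  assumes "finite A" "a \<in> A" shows "rvec a \<in> pos_cone A"
  using rvec_nat_monoid[OF nat_monoid_gen[OF assms]] .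

lemma pos_cone_eq:
  assumes "finite A"
  shows "pos_cone A = convex_cone hull (rvec ` A)"
proof
  show "convex_cone hull rvec ` A \<subseteq> pos_cone A"
    by (rule hull_minimal) (use rvec_in_pos_cone[OF assms] pos_cone_cc in auto)
  show "pos_cone A \<subseteq> convex_cone hull rvec ` A"
  proof
    fix x assume "x \<in> pos_cone A"
    then obtain c where c: "x = (\<Sum>a\<in>A. c a *\<^sub>R rvec a)" "\<forall>a\<in>A. c a \<ge> 0"
      unfolding pos_cone_def by blast
    show "x \<in> convex_cone hull rvec ` A" unfolding c(1)
      apply (rule cchull_sum)
      apply (rule convex_cone_hull_mul)
      using c(2) by (auto intro: hull_inc)
  qed
qed

lemma pos_cone_polyhedron: "finite A \<Longrightarrow> polyhedron (pos_cone A)"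
  by (simp add: pos_cone_eq polyhedron_convex_cone_hull)

lemma pos_cone_convex: "convex (pos_cone A)"
  using pos_cone_cc unfolding convex_cone_def by blast

lemma pos_cone_0: "0 \<in> pos_cone A"
  using pos_cone_cc[of A] by (simp add: convex_cone_iff)

lemma pos_cone_add: "x \<in> pos_cone A \<Longrightarrow> y \<in> pos_cone A \<Longrightarrow> x + y \<in> pos_cone A"
  using pos_cone_cc[of A] by (simp add: convex_cone_iff)

lemma pos_cone_scale: "x \<in> pos_cone A \<Longrightarrow> 0 \<le> c \<Longrightarrow> c *\<^sub>R x \<in> pos_cone A"
  using pos_cone_cc[of A] by (simp add: convex_cone_iff)

lemma rvec_int_span_span:
  assumes "z \<in> int_span B" shows "rvec z \<in> span (rvec ` B)"
proof -
  obtain k where "z = (\<Sum>a\<in>B. k a *s a)" using assms unfolding int_span_def by blast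
  then have "rvec z = (\<Sum>a\<in>B. of_int (k a) *\<^sub>R rvec a)" by (simp add: rvec_sum rvec_smult)
  then show ?thesis
    apply simp
    apply (rule span_sum)
    apply (rule span_scale)
    apply (rule span_base)
    by auto
qed

lemma span_rvec_UNIV:
  assumes "int_span A = UNIV"
  shows "span (rvec ` A) = UNIV"
proof -
  have "x \<in> span (rvec ` A)" for x :: "real^'a"
  proof -
    have ax: "(axis i 1 :: real^'a) = rvec (axis i 1)" for i
      by (simp add: rvec_def vec_eq_iff axis_def)
    have "x = (\<Sum>i\<in>UNIV. x $ i *\<^sub>R rvec (axis i 1))"
      using basis_expansion[of x] by (simp add: ax scalar_mult_eq_scaleR)
    also have "\<dots> \<in> span (rvec ` A)"
      using assms by (auto intro!: span_sum span_scale rvec_int_span_span)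
    finally show ?thesis .
  qed
  then show ?thesis by auto
qed

lemma aff_dim_pos_cone:
  fixes A :: "(int^'d::finite) set"
  assumes "finite A" "int_span A = UNIV"
  shows "aff_dim (pos_cone A) = int CARD('d)"
proof -
  have "affine hull (pos_cone A :: (real^'d) set) = span (pos_cone A)"
    by (rule affine_hull_span_0) (simp add: hull_inc pos_cone_0)
  moreover have "span (rvec ` A) \<subseteq> span (pos_cone A)"
    by (rule span_mono) (use rvec_in_pos_cone[OF assms(1)] in auto)
  ultimately have "affine hull (pos_cone A :: (real^'d) set) = UNIV"
    using span_rvec_UNIV[OF assms(2)] by auto
  then show ?thesis using aff_dim_eq_full[of "pos_cone A :: (real^'d) set"] by simp
qed

lemma integer_normal:
  fixes B :: "(real^'d) set"
  assumes fin: "finite B" and ind: "independent B" and cB: "card B = CARD('d) - 1"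
    and intB: "\<And>b i. b \<in> B \<Longrightarrow> b $ i \<in> \<int>"
  shows "\<exists>w. w \<noteq> 0 \<and> (\<forall>i. w $ i \<in> \<int>) \<and> span B = {x. w \<bullet> x = 0}"
proof -
  obtain i0 :: 'd where True by simp
  have ceq: "card (UNIV - {i0}) = card B" using cB by (simp add: card_Diff_singleton)
  have "\<exists>f. bij_betw f (UNIV - {i0}) B"
    by (rule finite_same_card_bij) (simp_all add: fin ceq)
  then obtain f where f: "bij_betw f (UNIV - {i0}) B" by blast
  define M where "M x = (\<chi> i. if i = i0 then x else f i)" for x :: "real^'d"
  define D where "D x = det (M x)" for x
  have Dadd: "D (x + y) = D x + D y" for x y
    unfolding D_def M_def using det_row_add[of i0 "\<lambda>_. x" "\<lambda>_. y" f] by simp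
  have Dmul: "D (c *\<^sub>R x) = c * D x" for c x
  proof -
    have "c *s x = c *\<^sub>R x" by (simp add: vec_eq_iff)
    then show ?thesis
      unfolding D_def M_def using det_row_mul[of i0 c "\<lambda>_. x" f] by metis
  qed
  have linD: "linear D" by (rule linearI) (simp_all add: Dadd Dmul)
  have DB: "D b = 0" if bB: "b \<in> B" for b
  proof -
    obtain j where j: "j \<noteq> i0" "f j = b" using f bB unfolding bij_betw_def by auto
    have "row i0 (M b) = row j (M b)" using j by (simp add: M_def row_def vec_eq_iff)
    then show ?thesis unfolding D_def using j by (intro det_identical_rows[of i0 j]) auto
  qed
  define w where "w = (\<chi> j. D (axis j 1))"
  have Dw: "D y = w \<bullet> y" for y
  proof -
    have "D y = D (\<Sum>j\<in>UNIV. y $ j *\<^sub>R axis j 1)"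
      using basis_expansion[of y] by (simp add: scalar_mult_eq_scaleR)
    also have "\<dots> = (\<Sum>j\<in>UNIV. y $ j * D (axis j 1))"
      by (simp add: linear_sum[OF linD] linear_scale[OF linD] o_def)
    also have "\<dots> = w \<bullet> y" by (simp add: w_def inner_vec_def mult.commute)
    finally show ?thesis .
  qed
  have "dim (span B) < CARD('d)"
    using ind cB by (simp add: dim_span dim_eq_card_independent)
  then have "span B \<noteq> UNIV"
  proof (intro notI)
    assume "span B = UNIV"
    then have "dim (span B) = CARD('d)" by simp
    with \<open>dim (span B) < CARD('d)\<close> show False by simp
  qed
  then obtain x where x: "x \<notin> span B" by blast
  have "x \<notin> B" using x span_base by blast
  have rows: "rows (M x) = insert x B"
  proof -
    have "rows (M x) = {if i = i0 then x else f i |i. True}"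
      by (simp add: rows_def row_def M_def vec_eq_iff)
    also have "\<dots> = insert x (f ` (UNIV - {i0}))" by auto
    also have "\<dots> = insert x B" using f by (simp add: bij_betw_def)
    finally show ?thesis .
  qed
  have "independent (insert x B)" using x ind by (rule independent_insertI)
  then have "dim (insert x B) = CARD('d)"
    using \<open>x \<notin> B\<close> fin cB by (simp add: dim_eq_card_independent)
  then have "rank (M x) = CARD('d)" by (simp add: row_rank_def rows)
  then have "D x \<noteq> 0" unfolding D_def by (simp add: det_eq_0_rank)
  then have "w \<noteq> 0" using Dw by auto
  have wint: "w $ j \<in> \<int>" for j
  proof -
    have ent: "M (axis j 1) $ i $ k \<in> \<int>" for i k
      using f intB unfolding M_def bij_betw_def by (auto simp: axis_def)
    show ?thesis unfolding w_def D_def det_def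
      by (simp, intro Ints_sum Ints_mult Ints_prod ent) auto
  qed
  have sub: "span B \<subseteq> {x. w \<bullet> x = 0}"
    by (rule span_minimal) (use DB Dw subspace_hyperplane in auto)
  have "span B = {x. w \<bullet> x = 0}"
  proof (rule subspace_dim_equal[OF subspace_span subspace_hyperplane sub])
    show "dim {x. w \<bullet> x = 0} \<le> dim (span B)"
      using \<open>w \<noteq> 0\<close> ind cB by (simp add: dim_hyperplane dim_span dim_eq_card_independent)
  qed
  then show ?thesis using \<open>w \<noteq> 0\<close> wint by blast
qed

lemma parallel_normal:
  fixes u u' :: "real^'d"
  assumes "span V = {x. u \<bullet> x = 0}" "u \<noteq> 0" "\<And>x. x \<in> V \<Longrightarrow> u' \<bullet> x = 0"
  shows "u' = ((u' \<bullet> u) / (u \<bullet> u)) *\<^sub>R u"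
proof -
  define t where "t = (u' \<bullet> u) / (u \<bullet> u)"
  define y where "y = u' - t *\<^sub>R u"
  have uu: "u \<bullet> u \<noteq> 0" using assms(2) by simp
  have "u \<bullet> y = 0" using uu by (simp add: y_def t_def inner_diff_right inner_commute)
  then have "y \<in> span V" using assms(1) by simp
  moreover have "span V \<subseteq> {x. u' \<bullet> x = 0}"
    by (rule span_minimal) (use assms(3) subspace_hyperplane in auto)
  ultimately have "u' \<bullet> y = 0" by auto
  then have "y \<bullet> y = 0" using \<open>u \<bullet> y = 0\<close>
    by (simp add: y_def inner_diff_left inner_commute)
  then have "y = 0" by simp
  then show ?thesis by (simp add: y_def t_def)
qed

lemma facet_main:
  fixes A :: "(int^'d) set" and \<sigma> :: "(real^'d) set"
  assumes fin: "finite A" and spanA: "int_span A = UNIV" and fac: "\<sigma> facet_of pos_cone A"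
  shows "is_facet_form A \<sigma> (facet_form A \<sigma>) \<and>
         (\<forall>x. cform (facet_form A \<sigma>) x = 0 \<longrightarrow> x \<in> cplx_span (A_in A \<sigma>))"
proof -
  let ?S = "pos_cone A"
  obtain n b where n: "n \<noteq> 0" "?S \<subseteq> {x. n \<bullet> x \<le> b}" "\<sigma> = ?S \<inter> {x. n \<bullet> x = b}"
    by (rule facet_of_polyhedron[OF pos_cone_polyhedron[OF fin] fac])
  have "\<sigma> \<noteq> {}" using fac by (simp add: facet_of_def)
  then obtain y where y: "y \<in> \<sigma>" by blast
  have "0 \<le> b" using n(2) pos_cone_0[of A] by force
  have "2 *\<^sub>R y \<in> ?S" using y n(3) pos_cone_scale[of y A 2] by auto
  then have "n \<bullet> (2 *\<^sub>R y) \<le> b" using n(2) by auto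
  moreover have "n \<bullet> y = b" using y n(3) by auto
  ultimately have b0: "b = 0" using \<open>0 \<le> b\<close> by (simp add: inner_scaleR_right)
  define Ain where "Ain = A_in A \<sigma>"
  define V where "V = rvec ` Ain"
  have finAin: "finite Ain" using fin by (simp add: Ain_def A_in_def)
  have finV: "finite V" using finAin by (simp add: V_def)
  have Vsig: "V \<subseteq> \<sigma>" by (auto simp: V_def Ain_def A_in_def)
  have nV: "n \<bullet> v = 0" if "v \<in> V" for v using Vsig that n(3) b0 by auto
  have sigspan: "\<sigma> \<subseteq> span V"
  proof
    fix x assume x: "x \<in> \<sigma>"
    then have xS: "x \<in> ?S" and nx: "n \<bullet> x = 0" using n(3) b0 by auto
    obtain c where c: "x = (\<Sum>a\<in>A. c a *\<^sub>R rvec a)" "\<forall>a\<in>A. c a \<ge> 0"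
      using xS unfolding pos_cone_def by blast
    have le: "0 \<le> - (c a * (n \<bullet> rvec a))" if "a \<in> A" for a
    proof -
      have "n \<bullet> rvec a \<le> 0" using n(2) b0 rvec_in_pos_cone[OF fin that] by auto
      then show ?thesis using c(2) that by (simp add: mult_nonneg_nonpos)
    qed
    have "(\<Sum>a\<in>A. - (c a * (n \<bullet> rvec a))) = - (n \<bullet> x)"
      by (simp add: c(1) inner_sum_right sum_negf)
    then have "(\<Sum>a\<in>A. - (c a * (n \<bullet> rvec a))) = 0" using nx by simp
    then have z: "\<forall>a\<in>A. - (c a * (n \<bullet> rvec a)) = 0"
      using sum_nonneg_eq_0_iff[OF fin, of "\<lambda>a. - (c a * (n \<bullet> rvec a))"] le by simp
    have "c a *\<^sub>R rvec a \<in> span V" if a: "a \<in> A" for a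
    proof (cases "c a = 0")
      case True then show ?thesis by (simp add: span_zero)
    next
      case False
      then have "n \<bullet> rvec a = 0" using z a by auto
      then have "rvec a \<in> \<sigma>" using n(3) b0 rvec_in_pos_cone[OF fin a] by auto
      then have "rvec a \<in> V" using a by (auto simp: V_def Ain_def A_in_def)
      then show ?thesis by (intro span_scale span_base)
    qed
    then show "x \<in> span V" unfolding c(1) by (intro span_sum) auto
  qed
  have dimV: "dim V = CARD('d) - 1"
  proof -
    have a1: "aff_dim \<sigma> = int CARD('d) - 1"
      using fac aff_dim_pos_cone[OF fin spanA] by (simp add: facet_of_def)
    have "aff_dim \<sigma> \<le> aff_dim (span V)" by (rule aff_dim_subset[OF sigspan])
    also have "\<dots> = int (dim V)" by (simp add: aff_dim_subspace dim_span)
    finally have ge: "int CARD('d) - 1 \<le> int (dim V)" using a1 by simp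
    have "V \<subseteq> {x. n \<bullet> x = 0}" using nV by auto
    then have "dim V \<le> dim {x. n \<bullet> x = 0}" by (rule dim_subset)
    also have "\<dots> = CARD('d) - 1" using n(1) by (simp add: dim_hyperplane)
    finally show ?thesis using ge by linarith
  qed
  obtain Bs where Bs: "Bs \<subseteq> V" "independent Bs" "V \<subseteq> span Bs" "card Bs = dim V"
    by (rule basis_exists)
  have finBs: "finite Bs" using Bs(1) finV finite_subset by auto
  have spanBs: "span Bs = span V"
  proof
    show "span Bs \<subseteq> span V" using Bs(1) by (rule span_mono)
    show "span V \<subseteq> span Bs" using Bs(3) by (intro span_minimal) auto
  qed
  have intBs: "bb $ i \<in> \<int>" if "bb \<in> Bs" for bb i
    using that Bs(1) by (auto simp: V_def rvec_Ints)
  have cBs: "card Bs = CARD('d) - 1" using Bs(4) dimV by simp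
  obtain w0 where w0: "w0 \<noteq> 0" "\<forall>i. w0 $ i \<in> \<int>" "span Bs = {x. w0 \<bullet> x = 0}"
    using integer_normal[OF finBs Bs(2) cBs intBs] by blast
  have kerV: "span V = {x. w0 \<bullet> x = 0}" using spanBs w0(3) by simp
  define t where "t = (n \<bullet> w0) / (w0 \<bullet> w0)"
  have npar: "n = t *\<^sub>R w0" unfolding t_def by (rule parallel_normal[OF kerV w0(1) nV])
  have "t \<noteq> 0" using n(1) npar by auto
  define w1 where "w1 = (if t < 0 then w0 else - w0)"
  have w1pos: "w1 \<bullet> x \<ge> 0" if "x \<in> ?S" for x
  proof -
    have "n \<bullet> x \<le> 0" using n(2) b0 that by auto
    then have "t * (w0 \<bullet> x) \<le> 0" using npar by simp
    then show ?thesis using \<open>t \<noteq> 0\<close> by (auto simp: w1_def mult_le_0_iff)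
  qed
  have w1int: "w1 $ i \<in> \<int>" for i using w0(2) by (auto simp: w1_def)
  have w1ne: "w1 \<noteq> 0" using w0(1) by (simp add: w1_def)
  have kerV1: "span V = {x. w1 \<bullet> x = 0}" using kerV by (auto simp: w1_def)
  have hint: "w1 \<bullet> rvec z \<in> \<int>" for z
    unfolding inner_vec_def by (intro Ints_sum Ints_mult) (simp_all add: w1int rvec_Ints)
  define gi where "gi z = \<lfloor>w1 \<bullet> rvec z\<rfloor>" for z
  have gi: "of_int (gi z) = w1 \<bullet> rvec z" for z
    using hint[of z] by (auto simp: gi_def elim!: Ints_cases)
  have gi_add: "gi (z + z') = gi z + gi z'" for z z'
  proof -
    have "real_of_int (gi (z + z')) = of_int (gi z + gi z')"
      by (simp add: gi rvec_add inner_add_right)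
    then show ?thesis by linarith
  qed
  have gi_smult: "gi (k *s z) = k * gi z" for k z
  proof -
    have "real_of_int (gi (k *s z)) = of_int (k * gi z)"
      by (simp add: gi rvec_smult)
    then show ?thesis by linarith
  qed
  have gi_diff: "gi (z - z') = gi z - gi z'" for z z'
    using gi_add[of "z - z'" z'] by simp
  obtain i where i: "w1 $ i \<noteq> 0" using w1ne by (auto simp: vec_eq_iff)
  have rax: "rvec (axis i 1) = axis i 1" by (simp add: rvec_def vec_eq_iff axis_def)
  have "gi (axis i 1) \<noteq> 0"
  proof
    assume "gi (axis i 1) = 0"
    then have "w1 \<bullet> rvec (axis i 1) = 0" using gi[of "axis i 1"] by simp
    then show False using i by (simp add: rax inner_axis)
  qed
  then obtain zp where zp: "gi zp > 0"
  proof (cases "gi (axis i 1) > 0")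
    case True then show ?thesis using that by blast
  next
    case False
    then have "gi ((-1) *s axis i 1) > 0" using \<open>gi (axis i 1) \<noteq> 0\<close> by (simp add: gi_smult)
    then show ?thesis using that by blast
  qed
  have gex: "\<exists>m::nat. m > 0 \<and> (\<exists>z. gi z = int m)"
    using zp by (intro exI[where x="nat (gi zp)"]) auto
  define g where "g = (LEAST m::nat. m > 0 \<and> (\<exists>z. gi z = int m))"
  have g: "g > 0 \<and> (\<exists>z. gi z = int g)" unfolding g_def by (rule LeastI_ex[OF gex])
  have gmin: "g \<le> m" if "m > 0" "gi z = int m" for m z
    unfolding g_def by (rule Least_le) (use that in blast)
  obtain zg where zg: "gi zg = int g" using g by blast
  have gpos: "g > 0" using g by blast
  have gdvd: "int g dvd gi z" for z
  proof -
    define r where "r = gi z mod int g"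
    have "gi (z - (gi z div int g) *s zg) = gi z - (gi z div int g) * int g"
      by (simp add: gi_diff gi_smult zg)
    also have "\<dots> = r" by (simp add: r_def minus_div_mult_eq_mod)
    finally have rz: "gi (z - (gi z div int g) *s zg) = r" .
    have r0: "0 \<le> r" "r < int g" using gpos by (simp_all add: r_def)
    have "r = 0"
    proof (rule ccontr)
      assume "r \<noteq> 0"
      then have "g \<le> nat r" using gmin[of "nat r" "z - (gi z div int g) *s zg"] rz r0 by simp
      then show False using r0 by linarith
    qed
    then show ?thesis by (simp add: r_def dvd_eq_mod_eq_0)
  qed
  define w where "w = (1 / real g) *\<^sub>R w1"
  have w_val: "w \<bullet> rvec z = of_int (gi z) / real g" for z by (simp add: w_def gi)
  have img: "(\<lambda>z. w \<bullet> rvec z) ` UNIV = \<int>"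
  proof
    show "(\<lambda>z. w \<bullet> rvec z) ` UNIV \<subseteq> \<int>"
    proof clarify
      fix z
      obtain k where "gi z = int g * k" using gdvd[of z] by (auto elim: dvdE)
      then have "w \<bullet> rvec z = of_int k" using gpos by (simp add: w_val)
      then show "w \<bullet> rvec z \<in> \<int>" by simp
    qed
    show "\<int> \<subseteq> (\<lambda>z. w \<bullet> rvec z) ` UNIV"
    proof
      fix x :: real assume "x \<in> \<int>"
      then obtain k where k: "x = of_int k" by (auto elim: Ints_cases)
      have "w \<bullet> rvec (k *s zg) = of_int k" using gpos by (simp add: w_val gi_smult zg)
      then show "x \<in> (\<lambda>z. w \<bullet> rvec z) ` UNIV" using k by (metis rangeI)
    qed
  qed
  have wS: "\<forall>x\<in>?S. w \<bullet> x \<ge> 0" using w1pos gpos by (simp add: w_def)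
  have kerw: "span V = {x. w \<bullet> x = 0}" using kerV1 gpos by (auto simp: w_def)
  have wsig: "\<forall>x\<in>\<sigma>. w \<bullet> x = 0" using sigspan kerw by auto
  have isw: "is_facet_form A \<sigma> w" unfolding is_facet_form_def using wS wsig img by blast
  have wne: "w \<noteq> 0" using w1ne gpos by (simp add: w_def)
  have uniq: "w' = w" if "is_facet_form A \<sigma> w'" for w'
  proof -
    from that have w'S: "\<forall>x\<in>?S. w' \<bullet> x \<ge> 0" and w'sig: "\<forall>x\<in>\<sigma>. w' \<bullet> x = 0"
      and img': "(\<lambda>z. w' \<bullet> rvec z) ` UNIV = \<int>" unfolding is_facet_form_def by auto
    define s where "s = (w' \<bullet> w) / (w \<bullet> w)"
    have par: "w' = s *\<^sub>R w" unfolding s_def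
      by (rule parallel_normal[OF kerw wne]) (use w'sig Vsig in auto)
    have ints: "w' \<bullet> rvec z = s * (w \<bullet> rvec z)" for z by (subst par) simp
    have "1 \<in> (\<lambda>z. w \<bullet> rvec z) ` UNIV" using img by simp
    then obtain z1 where z1: "w \<bullet> rvec z1 = 1" by auto
    have "1 \<in> (\<lambda>z. w' \<bullet> rvec z) ` UNIV" using img' by simp
    then obtain z2 where z2: "w' \<bullet> rvec z2 = 1" by auto
    have "w' \<bullet> rvec z1 \<in> \<int>" using img' by blast
    then have "s \<in> \<int>" using ints[of z1] z1 by simp
    then obtain p where p: "s = of_int p" by (auto elim: Ints_cases)
    have "w \<bullet> rvec z2 \<in> \<int>" using img by blast
    then obtain q where q: "w \<bullet> rvec z2 = of_int q" by (auto elim: Ints_cases)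
    have "real_of_int (p * q) = 1" using ints[of z2] z2 p q by simp
    then have "p * q = 1" by linarith
    then have "p = 1 \<or> p = -1" by (rule pos_zmult_eq_1_iff_lemma)
    moreover have "p \<noteq> -1"
    proof
      assume "p = -1"
      then have sm: "s = -1" using p by simp
      have wa: "w \<bullet> rvec a = 0" if "a \<in> A" for a
      proof -
        have "w \<bullet> rvec a \<ge> 0" using wS rvec_in_pos_cone[OF fin that] by blast
        moreover have "w' \<bullet> rvec a \<ge> 0" using w'S rvec_in_pos_cone[OF fin that] by blast
        ultimately show ?thesis using ints[of a] sm by simp
      qed
      have "z1 \<in> int_span A" using spanA by simp
      then obtain k where "z1 = (\<Sum>a\<in>A. k a *s a)" unfolding int_span_def by blast
      then have "w \<bullet> rvec z1 = (\<Sum>a\<in>A. of_int (k a) * (w \<bullet> rvec a))"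
        by (simp add: rvec_sum rvec_smult inner_sum_right)
      also have "\<dots> = 0" using wa by simp
      finally show False using z1 by simp
    qed
    ultimately have "p = 1" by simp
    then show ?thesis using par p by simp
  qed
  have ff: "facet_form A \<sigma> = w" unfolding facet_form_def
    by (rule the_equality[of "is_facet_form A \<sigma>" w, OF isw uniq])
  have ck: "x \<in> cplx_span Ain" if cx: "cform w x = 0" for x
  proof -
    define r where "r = (\<chi> i. Re (x $ i))"
    define s where "s = (\<chi> i. Im (x $ i))"
    have "w \<bullet> r = Re (cform w x)" by (simp add: r_def cform_def inner_vec_def)
    then have "r \<in> span V" using cx kerw by simp
    then obtain u where u: "r = (\<Sum>v\<in>V. u v *\<^sub>R v)" using span_finite[OF finV] by auto
    have "w \<bullet> s = Im (cform w x)" by (simp add: s_def cform_def inner_vec_def)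
    then have "s \<in> span V" using cx kerw by simp
    then obtain u' where u': "s = (\<Sum>v\<in>V. u' v *\<^sub>R v)" using span_finite[OF finV] by auto
    have injr: "inj_on rvec Ain" using rvec_inj by (rule inj_on_subset) simp
    have r2: "r = (\<Sum>a\<in>Ain. u (rvec a) *\<^sub>R rvec a)"
      using u by (simp add: V_def sum.reindex[OF injr])
    have s2: "s = (\<Sum>a\<in>Ain. u' (rvec a) *\<^sub>R rvec a)"
      using u' by (simp add: V_def sum.reindex[OF injr])
    define c where "c a = complex_of_real (u (rvec a)) + \<i> * complex_of_real (u' (rvec a))" for a
    have "x = (\<Sum>a\<in>Ain. c a *s cvec a)"
    proof (subst vec_eq_iff, intro allI)
      fix j
      have "Re (x $ j) = r $ j" by (simp add: r_def)
      also have "\<dots> = (\<Sum>a\<in>Ain. u (rvec a) * of_int (a $ j))" by (simp add: r2 rvec_def)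
      finally have re: "Re (x $ j) = (\<Sum>a\<in>Ain. u (rvec a) * of_int (a $ j))" .
      have "Im (x $ j) = s $ j" by (simp add: s_def)
      also have "\<dots> = (\<Sum>a\<in>Ain. u' (rvec a) * of_int (a $ j))" by (simp add: s2 rvec_def)
      finally have im: "Im (x $ j) = (\<Sum>a\<in>Ain. u' (rvec a) * of_int (a $ j))" .
      show "x $ j = (\<Sum>a\<in>Ain. c a *s cvec a) $ j"
        using re im by (simp add: complex_eq_iff c_def cvec_def)
    qed
    then show ?thesis unfolding cplx_span_def by blast
  qed
  show ?thesis using isw ck ff Ain_def by auto
qed

definition mono_fun :: "('d::finite \<Rightarrow> nat) \<Rightarrow> complex^'d \<Rightarrow> complex" where
  "mono_fun m x = (\<Prod>i\<in>UNIV. (x $ i) ^ (m i))"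

lemma poly_fun_iff: "poly_fun f \<longleftrightarrow> (\<exists>S c. finite S \<and> f = (\<lambda>x. \<Sum>m\<in>S. c m * mono_fun m x))"
  unfolding poly_fun_def mono_fun_def by simp

lemma mono_fun_add: "mono_fun (\<lambda>i. m1 i + m2 i) x = mono_fun m1 x * mono_fun m2 x"
  by (simp add: mono_fun_def power_add prod.distrib)

lemma poly_fun_const: "poly_fun (\<lambda>x. c)"
  unfolding poly_fun_iff
  by (intro exI[where x="{\<lambda>_. 0}"] exI[where x="\<lambda>_. c"]) (simp add: mono_fun_def)

lemma poly_fun_coord: "poly_fun (\<lambda>x. x $ j)"
proof -
  have "mono_fun (\<lambda>i. if i = j then 1 else 0) x = x $ j" for x :: "complex^'a"
  proof -
    have "mono_fun (\<lambda>i. if i = j then 1 else 0) x = (\<Prod>i\<in>UNIV. if i = j then x $ i else 1)"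
      unfolding mono_fun_def by (intro prod.cong) auto
    also have "\<dots> = x $ j" by (simp add: prod.delta)
    finally show ?thesis .
  qed
  then show ?thesis unfolding poly_fun_iff
    by (intro exI[where x="{\<lambda>i. if i = j then 1 else 0}"] exI[where x="\<lambda>_. 1"]) simp
qed

lemma sum_extend:
  assumes "finite T" "S \<subseteq> T"
  shows "(\<Sum>m\<in>T. (if m \<in> S then c m else 0) * M m) = (\<Sum>m\<in>S. c m * (M m :: complex))"
  by (rule sum.mono_neutral_cong_right) (use assms in auto)

lemma poly_fun_add:
  assumes "poly_fun f" "poly_fun g" shows "poly_fun (\<lambda>x. f x + g x)"
proof -
  obtain S1 c1 where 1: "finite S1" "f = (\<lambda>x. \<Sum>m\<in>S1. c1 m * mono_fun m x)"
    using assms(1) unfolding poly_fun_iff by blast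
  obtain S2 c2 where 2: "finite S2" "g = (\<lambda>x. \<Sum>m\<in>S2. c2 m * mono_fun m x)"
    using assms(2) unfolding poly_fun_iff by blast
  define c where "c m = (if m \<in> S1 then c1 m else 0) + (if m \<in> S2 then c2 m else 0)" for m
  have "f x + g x = (\<Sum>m\<in>S1 \<union> S2. c m * mono_fun m x)" for x
  proof -
    have "f x = (\<Sum>m\<in>S1 \<union> S2. (if m \<in> S1 then c1 m else 0) * mono_fun m x)"
      using 1 2 by (subst sum_extend) auto
    moreover have "g x = (\<Sum>m\<in>S1 \<union> S2. (if m \<in> S2 then c2 m else 0) * mono_fun m x)"
      using 1 2 by (subst sum_extend) auto
    ultimately show ?thesis by (simp add: c_def distrib_right sum.distrib)
  qed
  then show ?thesis unfolding poly_fun_iff using 1 2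
    by (intro exI[where x="S1 \<union> S2"] exI[where x=c]) auto
qed

lemma poly_fun_mult:
  assumes "poly_fun f" "poly_fun g" shows "poly_fun (\<lambda>x. f x * g x)"
proof -
  obtain S1 c1 where 1: "finite S1" "f = (\<lambda>x. \<Sum>m\<in>S1. c1 m * mono_fun m x)"
    using assms(1) unfolding poly_fun_iff by blast
  obtain S2 c2 where 2: "finite S2" "g = (\<lambda>x. \<Sum>m\<in>S2. c2 m * mono_fun m x)"
    using assms(2) unfolding poly_fun_iff by blast
  define h where "h p = (\<lambda>i. fst p i + snd p i)" for p :: "('a \<Rightarrow> nat) \<times> ('a \<Rightarrow> nat)"
  define c where "c m = (\<Sum>p\<in>{p \<in> S1 \<times> S2. h p = m}. c1 (fst p) * c2 (snd p))" for m
  have fin: "finite (S1 \<times> S2)" using 1 2 by simp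
  have "f x * g x = (\<Sum>m\<in>h ` (S1 \<times> S2). c m * mono_fun m x)" for x
  proof -
    have "f x * g x = (\<Sum>p\<in>S1 \<times> S2. (c1 (fst p) * c2 (snd p)) * mono_fun (h p) x)"
      unfolding 1 2 sum_product sum.cartesian_product
      by (intro sum.cong) (auto simp: h_def mono_fun_add mult_ac)
    also have "\<dots> = (\<Sum>m\<in>h ` (S1 \<times> S2). \<Sum>p\<in>{p \<in> S1 \<times> S2. h p = m}. (c1 (fst p) * c2 (snd p)) * mono_fun (h p) x)"
      by (rule sum.image_gen[OF fin])
    also have "\<dots> = (\<Sum>m\<in>h ` (S1 \<times> S2). c m * mono_fun m x)"
      unfolding c_def sum_distrib_right by (intro sum.cong refl) auto
    finally show ?thesis .
  qed
  then show ?thesis unfolding poly_fun_iff using fin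
    by (intro exI[where x="h ` (S1 \<times> S2)"] exI[where x=c]) auto
qed

lemma poly_fun_sum:
  "(\<And>i. i \<in> I \<Longrightarrow> poly_fun (f i)) \<Longrightarrow> poly_fun (\<lambda>x. \<Sum>i\<in>I. f i x)"
  by (induction I rule: infinite_finite_induct) (auto intro: poly_fun_add poly_fun_const)

lemma poly_fun_prod:
  "(\<And>i. i \<in> I \<Longrightarrow> poly_fun (f i)) \<Longrightarrow> poly_fun (\<lambda>x. \<Prod>i\<in>I. f i x)"
  by (induction I rule: infinite_finite_induct) (auto intro: poly_fun_mult poly_fun_const)

lemma poly_fun_cform: "poly_fun (\<lambda>x. cform w x + c)"
  unfolding cform_def
  by (intro poly_fun_add poly_fun_sum poly_fun_mult poly_fun_const poly_fun_coord)

lemma fw_props: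
  fixes A :: "(int^'d) set"
  assumes fin: "finite A" and spanA: "int_span A = UNIV" and fac: "\<sigma> facet_of pos_cone A"
  shows "\<forall>x\<in>pos_cone A. facet_form A \<sigma> \<bullet> x \<ge> 0"
    and "\<forall>x\<in>\<sigma>. facet_form A \<sigma> \<bullet> x = 0"
    and "(\<lambda>z. facet_form A \<sigma> \<bullet> rvec z) ` UNIV = \<int>"
    and "\<And>x. cform (facet_form A \<sigma>) x = 0 \<Longrightarrow> x \<in> cplx_span (A_in A \<sigma>)"
  using facet_main[OF fin spanA fac] unfolding is_facet_form_def by auto

lemma cform_span_zero:
  assumes "\<forall>a\<in>B. w \<bullet> rvec a = 0" "l \<in> cplx_span B"
  shows "cform w l = 0"
proof -
  obtain c where "l = (\<Sum>a\<in>B. c a *s cvec a)" using assms(2) unfolding cplx_span_def by blast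
  then have "cform w l = (\<Sum>a\<in>B. c a * of_real (w \<bullet> rvec a))"
    by (simp add: cform_sum cform_smult cform_cvec)
  also have "\<dots> = 0" using assms(1) by simp
  finally show ?thesis .
qed

lemma E_facet:
  fixes A :: "(int^'d) set"
  assumes fin: "finite A" and spanA: "int_span A = UNIV" and fac: "\<sigma> facet_of pos_cone A"
  shows "E_set A \<sigma> \<beta> \<noteq> {} \<longleftrightarrow>
    cform (facet_form A \<sigma>) \<beta> \<in> (\<lambda>v. cform (facet_form A \<sigma>) (cvec v)) ` nat_monoid A"
proof -
  let ?w = "facet_form A \<sigma>"
  note P = fw_props[OF fin spanA fac]
  have z: "\<forall>a\<in>A_in A \<sigma>. ?w \<bullet> rvec a = 0" using P(2) by (auto simp: A_in_def)
  show ?thesis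
  proof
    assume "E_set A \<sigma> \<beta> \<noteq> {}"
    then obtain l v zz where l: "l \<in> cplx_span (A_in A \<sigma>)" and v: "v \<in> nat_monoid A"
      and zz: "zz \<in> int_span (A_in A \<sigma>)" and eq: "\<beta> - l = cvec (v + zz)"
      unfolding E_set_def by blast
    have "\<beta> = l + cvec v + cvec zz" using eq by (simp add: cvec_add algebra_simps)
    then have "cform ?w \<beta> = cform ?w l + cform ?w (cvec v) + cform ?w (cvec zz)"
      by (simp add: cform_add)
    also have "cform ?w l = 0" by (rule cform_span_zero[OF z l])
    also have "cform ?w (cvec zz) = 0" by (rule cform_span_zero[OF z cplx_span_int[OF zz]])
    finally show "cform ?w \<beta> \<in> (\<lambda>v. cform ?w (cvec v)) ` nat_monoid A" using v by simp
  next
    assume "cform ?w \<beta> \<in> (\<lambda>v. cform ?w (cvec v)) ` nat_monoid A"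
    then obtain v where v: "v \<in> nat_monoid A" and eq: "cform ?w \<beta> = cform ?w (cvec v)" by blast
    have "cform ?w (\<beta> - cvec v) = 0" using eq by (simp add: cform_diff)
    then have l: "\<beta> - cvec v \<in> cplx_span (A_in A \<sigma>)" by (rule P(4))
    have "\<beta> - (\<beta> - cvec v) = cvec (v + 0)" by simp
    then have "\<beta> - cvec v \<in> E_set A \<sigma> \<beta>"
      unfolding E_set_def using l v int_span_0 by blast
    then show "E_set A \<sigma> \<beta> \<noteq> {}" by blast
  qed
qed

lemma semigroup:
  fixes A :: "(int^'d) set"
  assumes fin: "finite A" and spanA: "int_span A = UNIV" and fac: "\<sigma> facet_of pos_cone A"
  shows "\<exists>N::int. \<forall>n\<ge>N. \<exists>v\<in>nat_monoid A. facet_form A \<sigma> \<bullet> rvec v = of_int n"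
proof -
  let ?w = "facet_form A \<sigma>"
  note P = fw_props[OF fin spanA fac]
  have "1 \<in> (\<lambda>z. ?w \<bullet> rvec z) ` UNIV" using P(3) by simp
  then obtain z1 where z1: "?w \<bullet> rvec z1 = 1" by auto
  have "z1 \<in> int_span A" using spanA by simp
  then obtain k where k: "z1 = (\<Sum>a\<in>A. k a *s a)" unfolding int_span_def by blast
  define vP where "vP = (\<Sum>a\<in>A. of_nat (nat (k a)) *s a)"
  define vQ where "vQ = (\<Sum>a\<in>A. of_nat (nat (- k a)) *s a)"
  have vP: "vP \<in> nat_monoid A" unfolding vP_def nat_monoid_def
    by (intro CollectI exI[where x="\<lambda>a. nat (k a)"]) simp
  have vQ: "vQ \<in> nat_monoid A" unfolding vQ_def nat_monoid_def
    by (intro CollectI exI[where x="\<lambda>a. nat (- k a)"]) simp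
  have "?w \<bullet> rvec z1 = (\<Sum>a\<in>A. of_int (k a) * (?w \<bullet> rvec a))"
    by (simp add: k rvec_sum rvec_smult inner_sum_right)
  also have "\<dots> = (\<Sum>a\<in>A. of_int (nat (k a)) * (?w \<bullet> rvec a)) - (\<Sum>a\<in>A. of_int (nat (- k a)) * (?w \<bullet> rvec a))"
    unfolding sum_subtractf[symmetric] by (intro sum.cong refl) (simp add: algebra_simps)
  also have "\<dots> = ?w \<bullet> rvec vP - ?w \<bullet> rvec vQ"
    by (simp add: vP_def vQ_def rvec_sum rvec_smult inner_sum_right)
  finally have PQ: "?w \<bullet> rvec vP - ?w \<bullet> rvec vQ = 1" using z1 by simp
  have "?w \<bullet> rvec vP \<in> \<int>" using P(3) by blast
  then obtain p where p: "?w \<bullet> rvec vP = of_int p" by (auto elim: Ints_cases)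
  have "?w \<bullet> rvec vQ \<in> \<int>" using P(3) by blast
  then obtain q where q: "?w \<bullet> rvec vQ = of_int q" by (auto elim: Ints_cases)
  have "q \<ge> 0" using P(1) rvec_nat_monoid[OF vQ] q by fastforce
  have pq: "p = q + 1" using PQ p q by linarith
  show ?thesis
  proof (intro exI allI impI)
    fix n :: int assume n: "(q + 1) * p \<le> n"
    define t where "t = n div p"
    define r where "r = n mod p"
    have pp: "p > 0" using pq \<open>q \<ge> 0\<close> by simp
    have ntr: "n = t * p + r" by (simp add: t_def r_def)
    have r0: "0 \<le> r" "r < p" using pp by (simp_all add: r_def)
    have "t \<ge> q + 1"
    proof (rule ccontr)
      assume "\<not> t \<ge> q + 1"
      then have "t \<le> q" by simp
      then have m: "p * t \<le> p * q" using pp by (simp add: mult_left_mono)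
      have e1: "(q + 1) * p = p * q + p" by (simp add: algebra_simps)
      have e2: "n = p * t + r" using ntr by (simp add: algebra_simps)
      show False using n m r0 e1 e2 by linarith
    qed
    define v where "v = of_nat (nat (t + r - q)) *s vP + of_nat (nat (p - r)) *s vQ"
    have vin: "v \<in> nat_monoid A" unfolding v_def
      by (intro nat_monoid_add nat_monoid_smult vP vQ)
    have c1: "int (nat (t + r - q)) = t + r - q" using \<open>t \<ge> q + 1\<close> r0 by simp
    have c2: "int (nat (p - r)) = p - r" using r0 by simp
    have "?w \<bullet> rvec v = of_int (int (nat (t + r - q))) * (?w \<bullet> rvec vP) + of_int (int (nat (p - r))) * (?w \<bullet> rvec vQ)"
      unfolding v_def by (simp only: rvec_add rvec_smult inner_add_right inner_scaleR_right)
    also have "\<dots> = of_int (t + r - q) * of_int p + of_int (p - r) * of_int q"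
      by (simp only: c1 c2 p q)
    also have "\<dots> = of_int n" using ntr pq by (simp add: algebra_simps)
    finally show "\<exists>v\<in>nat_monoid A. ?w \<bullet> rvec v = of_int n" using vin by blast
  qed
qed

lemma class_shift:
  fixes A :: "(int^'d) set"
  assumes fin: "finite A" and spanA: "int_span A = UNIV" and b: "\<beta> \<in> equiv_class A \<alpha>"
  shows "\<exists>z. \<beta> = \<alpha> + cvec z"
proof -
  let ?S = "pos_cone A"
  have cf: "cone_face A ?S" unfolding cone_face_def
    using face_of_refl[OF pos_cone_convex] pos_cone_0 by blast
  have Ain: "A_in A ?S = A" using rvec_in_pos_cone[OF fin] by (auto simp: A_in_def)
  have ax: "(axis i 1 :: complex^'d) = cvec (axis i 1)" for i
    by (simp add: cvec_def vec_eq_iff axis_def)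
  have "\<alpha> = (\<Sum>i\<in>UNIV. \<alpha> $ i *s cvec (axis i 1))"
    using basis_expansion[of \<alpha>] by (simp add: ax)
  also have "\<dots> \<in> cplx_span A"
    by (intro cplx_span_sum cplx_span_smult cplx_span_int) (simp add: spanA)
  finally have "\<alpha> \<in> cplx_span A" .
  then have "\<alpha> \<in> cplx_span A \<and> (\<exists>v\<in>nat_monoid A. \<exists>z\<in>int_span A. \<alpha> - \<alpha> = cvec (v + z))"
    using nat_monoid_0[of A] int_span_0[of A] by (metis add_0 cvec_0 diff_self)
  then have "\<alpha> \<in> E_set A ?S \<alpha>" by (simp add: E_set_def Ain)
  moreover have "E_set A ?S \<beta> = E_set A ?S \<alpha>" using b cf unfolding equiv_class_def by auto
  ultimately have "\<alpha> \<in> E_set A ?S \<beta>" by simp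
  then obtain v zz where "\<beta> - \<alpha> = cvec (v + zz)" unfolding E_set_def by blast
  then have "\<beta> = \<alpha> + cvec (v + zz)" by (simp add: algebra_simps)
  then show ?thesis by blast
qed

lemma half_minus_int_ne: "(1/2 :: complex) + (- of_int k) \<noteq> 0"
proof
  assume h: "(1/2 :: complex) + (- of_int k) = 0"
  have "1/2 - real_of_int k = 0" using arg_cong[OF h, of Re] by simp
  then have "real_of_int (2 * k) = 1" by simp
  then have "2 * k = 1" by (simp only: of_int_eq_1_iff)
  then show False by presburger
qed

theorem proposition8p16:
  fixes A :: "(int ^ 'd) set" and \<alpha> :: "complex ^ 'd"
  assumes "finite A"
    and "int_span A = UNIV"
    and "zariski_closure (equiv_class A \<alpha>) = UNIV"
  shows "R_pos A \<alpha> \<noteq> {}"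
proof -
  note fin = assms(1) and spanA = assms(2) and zar = assms(3)
  define Fp where "Fp = F_plus A \<alpha>"
  define Fm where "Fm = F_minus A \<alpha>"
  let ?w = "facet_form A"
  have Fpfac: "\<sigma> facet_of pos_cone A" if "\<sigma> \<in> Fp \<union> Fm" for \<sigma>
    using that by (auto simp: Fp_def Fm_def F_plus_def F_minus_def)
  have disj: "\<sigma> \<notin> Fm" if "\<sigma> \<in> Fp" for \<sigma>
    using that by (auto simp: Fp_def Fm_def F_plus_def F_minus_def)
  have finF: "finite (Fp \<union> Fm)"
    by (rule finite_subset[OF _ finite_polyhedron_facets[OF pos_cone_polyhedron[OF fin]]])
       (use Fpfac in auto)
  define u where "u \<sigma> = (if \<sigma> \<in> Fp then ?w \<sigma> else - ?w \<sigma>)" for \<sigma>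
  define Z where "Z = {z. \<alpha> + cvec z \<in> equiv_class A \<alpha>}"
  have Einv: "E_set A \<sigma> (\<alpha> + cvec z) = E_set A \<sigma> \<alpha>" if "\<sigma> facet_of pos_cone A" "z \<in> Z" for \<sigma> z
    using that unfolding Z_def equiv_class_def cone_face_def facet_of_def by auto
  have cf_shift: "cform (?w \<sigma>) (\<alpha> + cvec z) = cform (?w \<sigma>) \<alpha> + of_real (?w \<sigma> \<bullet> rvec z)" for \<sigma> z
    by (simp add: cform_add cform_cvec)
  have bound: "\<exists>c. \<forall>z\<in>Z. u \<sigma> \<bullet> rvec z \<ge> - c" if \<sigma>: "\<sigma> \<in> Fp \<union> Fm" for \<sigma>
  proof (cases "\<sigma> \<in> Fp")
    case True
    then obtain v0 where v0: "v0 \<in> nat_monoid A" "cform (?w \<sigma>) \<alpha> = cform (?w \<sigma>) (cvec v0)"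
      by (auto simp: Fp_def F_plus_def)
    have fac: "\<sigma> facet_of pos_cone A" using Fpfac \<sigma> by blast
    have Ene: "E_set A \<sigma> \<alpha> \<noteq> {}" using E_facet[OF fin spanA fac, of \<alpha>] v0 by blast
    show ?thesis
    proof (intro exI ballI)
      fix z assume z: "z \<in> Z"
      have "E_set A \<sigma> (\<alpha> + cvec z) \<noteq> {}" using Einv[OF fac z] Ene by simp
      then obtain v where v: "v \<in> nat_monoid A" "cform (?w \<sigma>) (\<alpha> + cvec z) = cform (?w \<sigma>) (cvec v)"
        using E_facet[OF fin spanA fac, of "\<alpha> + cvec z"] by blast
      have "(of_real (?w \<sigma> \<bullet> rvec z) :: complex) = of_real (?w \<sigma> \<bullet> rvec v - ?w \<sigma> \<bullet> rvec v0)"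
        using v(2) v0(2) cf_shift[of \<sigma> z] by (simp add: cform_cvec eq_diff_eq add.commute)
      then have eq: "?w \<sigma> \<bullet> rvec z = ?w \<sigma> \<bullet> rvec v - ?w \<sigma> \<bullet> rvec v0"
        by (simp only: of_real_eq_iff)
      moreover have "?w \<sigma> \<bullet> rvec v \<ge> 0"
        using fw_props(1)[OF fin spanA fac] rvec_nat_monoid[OF v(1)] by blast
      ultimately show "u \<sigma> \<bullet> rvec z \<ge> - (?w \<sigma> \<bullet> rvec v0)" using True by (simp add: u_def)
    qed
  next
    case False
    then have sm: "\<sigma> \<in> Fm" using \<sigma> by blast
    have fac: "\<sigma> facet_of pos_cone A" using Fpfac \<sigma> by blast
    from sm have "cform (?w \<sigma>) \<alpha> \<in> \<int>" by (simp add: Fm_def F_minus_def)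
    then obtain m0 where m0: "cform (?w \<sigma>) \<alpha> = of_int m0" by (auto elim: Ints_cases)
    obtain N where N: "\<forall>n\<ge>N. \<exists>v\<in>nat_monoid A. ?w \<sigma> \<bullet> rvec v = of_int n"
      using semigroup[OF fin spanA fac] by blast
    have notE: "E_set A \<sigma> \<alpha> = {}"
    proof (rule ccontr)
      assume "E_set A \<sigma> \<alpha> \<noteq> {}"
      then have "cform (?w \<sigma>) \<alpha> \<in> (\<lambda>v. cform (?w \<sigma>) (cvec v)) ` nat_monoid A"
        using E_facet[OF fin spanA fac] by blast
      then have "\<sigma> \<in> Fp" using fac by (simp add: Fp_def F_plus_def)
      with False show False by simp
    qed
    show ?thesis
    proof (intro exI ballI)
      fix z assume z: "z \<in> Z"
      have "?w \<sigma> \<bullet> rvec z \<in> \<int>" using fw_props(3)[OF fin spanA fac] by blast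
      then obtain k where k: "?w \<sigma> \<bullet> rvec z = of_int k" by (auto elim: Ints_cases)
      have "m0 + k < N"
      proof (rule ccontr)
        assume "\<not> m0 + k < N"
        then have "m0 + k \<ge> N" by simp
        from N[rule_format, OF this] obtain v where v: "v \<in> nat_monoid A" "?w \<sigma> \<bullet> rvec v = of_int (m0 + k)"
          by blast
        have "cform (?w \<sigma>) (\<alpha> + cvec z) = cform (?w \<sigma>) (cvec v)"
          using cf_shift[of \<sigma> z] m0 k v(2) by (simp add: cform_cvec)
        then have "E_set A \<sigma> (\<alpha> + cvec z) \<noteq> {}"
          using E_facet[OF fin spanA fac, of "\<alpha> + cvec z"] v(1) by blast
        then show False using Einv[OF fac z] notE by simp
      qed
      then show "u \<sigma> \<bullet> rvec z \<ge> - (of_int (N - m0))" using False k by (simp add: u_def)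
    qed
  qed
  have uint: "u \<sigma> \<bullet> rvec z \<in> \<int>" if "\<sigma> \<in> Fp \<union> Fm" for \<sigma> z
    using fw_props(3)[OF fin spanA Fpfac[OF that]] by (auto simp: u_def)
  have une: "u \<sigma> \<noteq> 0" if "\<sigma> \<in> Fp \<union> Fm" for \<sigma>
  proof -
    have "1 \<in> (\<lambda>z. ?w \<sigma> \<bullet> rvec z) ` UNIV" using fw_props(3)[OF fin spanA Fpfac[OF that]] by simp
    then have "?w \<sigma> \<noteq> 0" by auto
    then show ?thesis by (simp add: u_def)
  qed
  define U where "U = u ` (Fp \<union> Fm)"
  have finU: "finite U" using finF by (simp add: U_def)
  show ?thesis
  proof (cases "0 \<in> convex hull U")
    case False
    have "closed (convex hull U)"
      by (rule compact_imp_closed[OF compact_convex_hull[OF finite_imp_compact[OF finU]]])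
    then obtain a b where ab: "a \<noteq> 0" "0 < b" "\<forall>x\<in>convex hull U. inner a x > b"
      using separating_hyperplane_closed_0[OF convex_convex_hull _ False] by blast
    have "a \<in> R_pos A \<alpha>"
      unfolding R_pos_def
    proof (intro CollectI conjI ballI)
      fix \<sigma> assume "\<sigma> \<in> F_plus A \<alpha>"
      then have s: "\<sigma> \<in> Fp" by (simp add: Fp_def)
      then have "u \<sigma> \<in> convex hull U" unfolding U_def by (intro hull_inc) auto
      then have "a \<bullet> u \<sigma> > b" using ab(3) by blast
      then have "a \<bullet> u \<sigma> > 0" using ab(2) by linarith
      then show "?w \<sigma> \<bullet> a > 0" using s by (simp add: u_def inner_commute)
    next
      fix \<sigma> assume "\<sigma> \<in> F_minus A \<alpha>"
      then have s: "\<sigma> \<in> Fm" by (simp add: Fm_def)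
      then have ns: "\<sigma> \<notin> Fp" using disj by blast
      have "u \<sigma> \<in> convex hull U" unfolding U_def using s by (intro hull_inc) auto
      then have "a \<bullet> u \<sigma> > b" using ab(3) by blast
      then have "a \<bullet> u \<sigma> > 0" using ab(2) by linarith
      then show "?w \<sigma> \<bullet> a < 0" using ns by (simp add: u_def inner_commute)
    qed
    then show ?thesis by blast
  next
    case True
    then obtain lam where lam: "\<forall>x\<in>U. 0 \<le> lam x" "sum lam U = 1" "(\<Sum>x\<in>U. lam x *\<^sub>R x) = 0"
      unfolding convex_hull_finite[OF finU] by blast
    have Ub: "\<forall>x\<in>U. \<exists>c. \<forall>z\<in>Z. x \<bullet> rvec z \<ge> - c"
      unfolding U_def using bound by blast
    then obtain cc where cc: "\<forall>x\<in>U. \<forall>z\<in>Z. x \<bullet> rvec z \<ge> - cc x" by metis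
    have "\<exists>x\<in>U. lam x \<noteq> 0"
    proof (rule ccontr)
      assume "\<not> (\<exists>x\<in>U. lam x \<noteq> 0)"
      then have "sum lam U = 0" by simp
      then show False using lam(2) by simp
    qed
    then obtain x0 where x0U: "x0 \<in> U" and x0nz: "lam x0 \<noteq> 0" by blast
    have "0 \<le> lam x0" using lam(1) x0U by blast
    then have x0: "x0 \<in> U" "lam x0 > 0" using x0U x0nz by simp_all
    obtain s0 where s0: "s0 \<in> Fp \<union> Fm" "x0 = u s0" using x0(1) unfolding U_def by (rule imageE)
    have x0int: "x0 \<bullet> rvec z \<in> \<int>" for z using uint[OF s0(1)] s0(2) by simp
    have x0ne: "x0 \<noteq> 0" using une[OF s0(1)] s0(2) by simp
    define C where "C = (\<Sum>x\<in>U. lam x * \<bar>cc x\<bar>)"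
    have upper: "x0 \<bullet> rvec z \<le> C / lam x0" if z: "z \<in> Z" for z
    proof -
      have "(\<Sum>x\<in>U. lam x * (x \<bullet> rvec z)) = (\<Sum>x\<in>U. lam x *\<^sub>R x) \<bullet> rvec z"
        by (simp add: inner_sum_left)
      also have "\<dots> = 0" using lam(3) by simp
      finally have s0: "(\<Sum>x\<in>U. lam x * (x \<bullet> rvec z)) = 0" .
      have split: "(\<Sum>x\<in>U. lam x * (x \<bullet> rvec z)) = lam x0 * (x0 \<bullet> rvec z) + (\<Sum>x\<in>U - {x0}. lam x * (x \<bullet> rvec z))"
        using finU x0(1) by (simp add: sum.remove)
      have "(\<Sum>x\<in>U - {x0}. - (lam x * \<bar>cc x\<bar>)) \<le> (\<Sum>x\<in>U - {x0}. lam x * (x \<bullet> rvec z))"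
      proof (rule sum_mono)
        fix x assume x: "x \<in> U - {x0}"
        have "x \<bullet> rvec z \<ge> - cc x" using cc x z by blast
        then have "x \<bullet> rvec z \<ge> - \<bar>cc x\<bar>" using abs_ge_self[of "cc x"] by linarith
        then have "lam x * (- \<bar>cc x\<bar>) \<le> lam x * (x \<bullet> rvec z)"
          using lam(1) x by (intro mult_left_mono) auto
        then show "- (lam x * \<bar>cc x\<bar>) \<le> lam x * (x \<bullet> rvec z)" by simp
      qed
      then have ge: "- (\<Sum>x\<in>U - {x0}. lam x * \<bar>cc x\<bar>) \<le> (\<Sum>x\<in>U - {x0}. lam x * (x \<bullet> rvec z))"
        by (simp add: sum_negf)
      have "(\<Sum>x\<in>U - {x0}. lam x * \<bar>cc x\<bar>) \<le> C"
        unfolding C_def using finU lam(1) by (intro sum_mono2) auto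
      then have "lam x0 * (x0 \<bullet> rvec z) \<le> C" using s0 split ge by linarith
      then show ?thesis using x0(2) by (simp add: pos_le_divide_eq mult.commute)
    qed
    have lower: "x0 \<bullet> rvec z \<ge> - cc x0" if "z \<in> Z" for z using cc x0(1) that by blast
    define K where "K = {k::int. - cc x0 \<le> of_int k \<and> of_int k \<le> C / lam x0}"
    have finK: "finite K"
      by (rule finite_subset[of _ "{\<lceil>- cc x0\<rceil>..\<lfloor>C / lam x0\<rfloor>}"])
         (auto simp: K_def ceiling_le_iff le_floor_iff)
    define p where "p y = (\<Prod>k\<in>K. cform x0 y + (- cform x0 \<alpha> - of_int k))" for y
    have pf: "poly_fun p" unfolding p_def by (intro poly_fun_prod poly_fun_cform)
    have pz: "\<forall>\<beta>\<in>equiv_class A \<alpha>. p \<beta> = 0"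
    proof
      fix \<beta> assume b: "\<beta> \<in> equiv_class A \<alpha>"
      obtain z where z: "\<beta> = \<alpha> + cvec z" using class_shift[OF fin spanA b] by blast
      then have zZ: "z \<in> Z" using b by (simp add: Z_def)
      obtain k where k: "x0 \<bullet> rvec z = of_int k" using x0int[of z] by (auto elim: Ints_cases)
      have kK: "k \<in> K" using lower[OF zZ] upper[OF zZ] k by (simp add: K_def)
      have "cform x0 \<beta> + (- cform x0 \<alpha> - of_int k) = 0" using k by (simp add: z cform_add cform_cvec)
      then show "p \<beta> = 0" unfolding p_def using finK kK by (metis prod_zero_iff)
    qed
    obtain i where i: "x0 $ i \<noteq> 0" using x0ne by (auto simp: vec_eq_iff)
    define y0 where "y0 = \<alpha> + complex_of_real (1 / (2 * x0 $ i)) *s cvec (axis i 1)"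
    have cax: "cform x0 (cvec (axis i 1)) = complex_of_real (x0 $ i)"
    proof -
      have "rvec (axis i 1) = axis i 1" by (simp add: rvec_def vec_eq_iff axis_def)
      then show ?thesis by (simp add: cform_cvec inner_axis)
    qed
    have "complex_of_real (1 / (2 * x0 $ i)) * complex_of_real (x0 $ i) = complex_of_real (1 / (2 * x0 $ i) * x0 $ i)"
      by simp
    also have "\<dots> = 1/2" using i by simp
    finally have half: "complex_of_real (1 / (2 * x0 $ i)) * complex_of_real (x0 $ i) = 1/2" .
    have cy0: "cform x0 y0 = cform x0 \<alpha> + 1/2"
      by (simp only: y0_def cform_add cform_smult cax half)
    have "p y0 \<noteq> 0"
    proof -
      have "cform x0 y0 + (- cform x0 \<alpha> - of_int k) \<noteq> 0" for k
        using half_minus_int_ne[of k] by (simp add: cy0 algebra_simps)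
      then show ?thesis unfolding p_def using finK by (simp add: prod_zero_iff)
    qed
    moreover have "y0 \<in> zariski_closure (equiv_class A \<alpha>)" using zar by simp
    ultimately show ?thesis using pf pz unfolding zariski_closure_def by blast
  qed
qed

end
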